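(* Let $S_a=(X_a,X_{a0},X_{aS},U_a,\rightarrow_a,Y_a,H_a)$ and $S_b=(X_b,X_{b0},X_{bS},U_b,\rightarrow_b,Y_b,H_b)$ be metric systems with the same output set $Y_a=Y_b$ and metric $\mathbf{d}$, and let $\varepsilon,\delta\geq 0$. If $S_b\preceq_I^\varepsilon S_a$, then: if $S_b$ is not $(\delta+2\varepsilon)$-approximate initial-state opaque, then $S_a$ is not $\delta$-approximate initial-state opaque.
   Context: A system $S=(X,X_0,X_S,U,\rightarrow,Y,H)$ has states $X$, initial states $X_0\subseteq X$, secret states $X_S\subseteq X$, inputs $U$, transition relation $\rightarrow\subseteq X\times U\times X$ (write $x\xrightarrow{u}x'$), outputs $Y$ with metric $\mathbf{d}$, output map $H:X\to Y$. For $\delta\ge0$, $S$ is $\delta$-approximate initial-state opaque if for every $x_0\in X_0\cap X_S$ and finite run $x_0\xrightarrow{u_1}x_1\cdots\xrightarrow{u_n}x_n$ there exist $x_0'\in X_0\setminus X_S$ and a run $x_0'\xrightarrow{u_1'}x_1'\cdots\xrightarrow{u_n'}x_n'$ (inputs arbitrary) with $\max_{0\le i\le n}\mathbf{d}(H(x_i),H(x_i'))\le\delta$. For systems $S_1,S_2$ with the same metric output set, an $\varepsilon$-approximate initial-state opacity preserving simulation relation from $S_1$ to $S_2$ is $R\subseteq X_1\times X_2$ such that: (1a) for all $x_{10}\in X_{10}\cap X_{1S}$ there is $x_{20}\in X_{20}\cap X_{2S}$ with $(x_{10},x_{20})\in R$; (1b) for all $x_{20}\in X_{20}\setminus X_{2S}$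 there is $x_{10}\in X_{10}\setminus X_{1S}$ with $(x_{10},x_{20})\in R$; (2) $\mathbf{d}(H_1(x_1),H_2(x_2))\le\varepsilon$ for all $(x_1,x_2)\in R$; (3) for all $(x_1,x_2)\in R$: (a) for every $x_1\xrightarrow{u_1}x_1'$ there is $x_2\xrightarrow{u_2}x_2'$ with $(x_1',x_2')\in R$; (b) for every $x_2\xrightarrow{u_2}x_2'$ there is $x_1\xrightarrow{u_1}x_1'$ with $(x_1',x_2')\in R$. We write $S_1\preceq_I^\varepsilon S_2$ if such an $R$ exists. *)

theory Defs
  imports "HOL-Analysis.Analysis"
begin

text \<open>A (metric) system S = (X, X0, XS, U, transition relation, Y, H).
  Outputs live in a metric space type 'y (metric dist); Y is the output set.\<close>
record ('x, 'u, 'y) system =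
  states :: "'x set"
  init :: "'x set"
  secret :: "'x set"
  inputs :: "'u set"
  trans :: "('x \<times> 'u \<times> 'x) set"
  outs :: "'y set"
  outmap :: "'x \<Rightarrow> 'y"

definition wf_system :: "('x, 'u, 'y) system \<Rightarrow> bool" where
  "wf_system S \<longleftrightarrow> init S \<subseteq> states S \<and> secret S \<subseteq> states S \<and>
     trans S \<subseteq> states S \<times> inputs S \<times> states S \<and> outmap S ` states S \<subseteq> outs S"

text \<open>A finite run of length n: states x 0 .. x n, inputs u 1 .. u n,
  with x (i-1) --u i--> x i.\<close>
definition is_run :: "('x, 'u, 'y) system \<Rightarrow> nat \<Rightarrow> (nat \<Rightarrow> 'x) \<Rightarrow> (nat \<Rightarrow> 'u) \<Rightarrow> bool" where
  "is_run S n x u \<longleftrightarrow> (\<forall>i\<in>{1..n}. (x (i - 1), u i, x i) \<in> trans S)"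

definition approx_init_opaque :: "('x, 'u, 'y::metric_space) system \<Rightarrow> real \<Rightarrow> bool" where
  "approx_init_opaque S \<delta> \<longleftrightarrow>
     (\<forall>n x u. x 0 \<in> init S \<inter> secret S \<and> is_run S n x u \<longrightarrow>
        (\<exists>x' u'. x' 0 \<in> init S - secret S \<and> is_run S n x' u' \<and>
           (\<forall>i\<in>{0..n}. dist (outmap S (x i)) (outmap S (x' i)) \<le> \<delta>)))"

definition is_ISOP_sim ::
  "('x1, 'u1, 'y::metric_space) system \<Rightarrow> ('x2, 'u2, 'y) system \<Rightarrow> real \<Rightarrow> ('x1 \<times> 'x2) set \<Rightarrow> bool" where
  "is_ISOP_sim S1 S2 \<epsilon> R \<longleftrightarrow>
     R \<subseteq> states S1 \<times> states S2 \<and>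
     (\<forall>x10\<in>init S1 \<inter> secret S1. \<exists>x20\<in>init S2 \<inter> secret S2. (x10, x20) \<in> R) \<and>
     (\<forall>x20\<in>init S2 - secret S2. \<exists>x10\<in>init S1 - secret S1. (x10, x20) \<in> R) \<and>
     (\<forall>(x1, x2)\<in>R. dist (outmap S1 x1) (outmap S2 x2) \<le> \<epsilon>) \<and>
     (\<forall>(x1, x2)\<in>R.
        (\<forall>u1 x1'. (x1, u1, x1') \<in> trans S1 \<longrightarrow>
           (\<exists>u2 x2'. (x2, u2, x2') \<in> trans S2 \<and> (x1', x2') \<in> R)) \<and>
        (\<forall>u2 x2'. (x2, u2, x2') \<in> trans S2 \<longrightarrow>
           (\<exists>u1 x1'. (x1, u1, x1') \<in> trans S1 \<and> (x1', x2') \<in> R)))"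

definition ISOP_simulates ::
  "('x1, 'u1, 'y::metric_space) system \<Rightarrow> real \<Rightarrow> ('x2, 'u2, 'y) system \<Rightarrow> bool" where
  "ISOP_simulates S1 \<epsilon> S2 \<longleftrightarrow> (\<exists>R. is_ISOP_sim S1 S2 \<epsilon> R)"

end

theory Submission
  imports Defs
begin

lemma sim_run:
  fixes n :: nat
  assumes step: "\<forall>p q w p'. (p,q)\<in>R \<longrightarrow> (p,w,p')\<in>T1 \<longrightarrow> (\<exists>v q'. (q,v,q')\<in>T2 \<and> (p',q')\<in>R)"
  shows "(\<forall>i\<in>{1..n}. (x (i-1), u i, x i) \<in> T1) \<Longrightarrow> (x 0, y0) \<in> R \<Longrightarrow>
    \<exists>y v. y 0 = y0 \<and> (\<forall>i\<in>{1..n}. (y (i-1), v i, y i) \<in> T2) \<and> (\<forall>i\<le>n. (x i, y i) \<in> R)"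
proof (induction n)
  case 0
  then show ?case by auto
next
  case (Suc n)
  have "\<forall>i\<in>{1..n}. (x (i-1), u i, x i) \<in> T1"
  proof
    fix i assume "i \<in> {1..n}"
    then have "i \<in> {1..Suc n}" by simp
    then show "(x (i-1), u i, x i) \<in> T1" using Suc.prems(1) by blast
  qed
  then obtain y v where y: "y 0 = y0" "\<forall>i\<in>{1..n}. (y (i-1), v i, y i) \<in> T2" "\<forall>i\<le>n. (x i, y i) \<in> R"
    using Suc.IH Suc.prems(2) by blast
  have "(x n, u (Suc n), x (Suc n)) \<in> T1" using bspec[OF Suc.prems(1), of "Suc n"] by simp
  then obtain v' q' where q: "(y n, v', q') \<in> T2" "(x (Suc n), q') \<in> R"
  proof -
    have "(x n, y n) \<in> R" using y(3) by simp
    then show ?thesis using step \<open>(x n, u (Suc n), x (Suc n)) \<in> T1\<close> that by blast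
  qed
  show ?case
  proof (intro exI conjI)
    show "(y(Suc n := q')) 0 = y0" using y by simp
    show "\<forall>i\<in>{1..Suc n}. ((y(Suc n := q')) (i-1), (v(Suc n := v')) i, (y(Suc n := q')) i) \<in> T2"
    proof
      fix i assume i: "i \<in> {1..Suc n}"
      show "((y(Suc n := q')) (i-1), (v(Suc n := v')) i, (y(Suc n := q')) i) \<in> T2"
      proof (cases "i = Suc n")
        case True then show ?thesis using q by simp
      next
        case False
        then have i2: "i \<in> {1..n}" and "i - 1 \<noteq> Suc n" using i by auto
        then show ?thesis using bspec[OF y(2) i2] False by simp
      qed
    qed
    show "\<forall>i\<le>Suc n. (x i, (y(Suc n := q')) i) \<in> R"
    proof (intro allI impI)
      fix i assume "i \<le> Suc n"
      then show "(x i, (y(Suc n := q')) i) \<in> R" using y(3) q(2) by (cases "i = Suc n") auto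
    qed
  qed
qed

theorem mainTheorem6:
  fixes Sa :: "('xa, 'ua, 'y::metric_space) system"
    and Sb :: "('xb, 'ub, 'y) system"
    and \<epsilon> \<delta> :: real
  assumes "wf_system Sa" and "wf_system Sb"
    and "outs Sa = outs Sb"
    and "\<epsilon> \<ge> 0" and "\<delta> \<ge> 0"
    and "ISOP_simulates Sb \<epsilon> Sa"
    and "\<not> approx_init_opaque Sb (\<delta> + 2 * \<epsilon>)"
  shows "\<not> approx_init_opaque Sa \<delta>"
proof
  assume op: "approx_init_opaque Sa \<delta>"
  obtain R where R: "is_ISOP_sim Sb Sa \<epsilon> R" using assms(6) unfolding ISOP_simulates_def by blast
  obtain n xb ub where xb: "xb 0 \<in> init Sb \<inter> secret Sb" "is_run Sb n xb ub"
    and nop: "\<not> (\<exists>x' u'. x' 0 \<in> init Sb - secret Sb \<and> is_run Sb n x' u' \<and>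
           (\<forall>i\<in>{0..n}. dist (outmap Sb (xb i)) (outmap Sb (x' i)) \<le> \<delta> + 2 * \<epsilon>))"
    using assms(7) unfolding approx_init_opaque_def by blast
  obtain xa0 where xa0: "xa0 \<in> init Sa \<inter> secret Sa" "(xb 0, xa0) \<in> R"
    using R xb(1) unfolding is_ISOP_sim_def by blast
  have Rf: "\<forall>(x1, x2)\<in>R.
        (\<forall>u1 x1'. (x1, u1, x1') \<in> trans Sb \<longrightarrow>
           (\<exists>u2 x2'. (x2, u2, x2') \<in> trans Sa \<and> (x1', x2') \<in> R)) \<and>
        (\<forall>u2 x2'. (x2, u2, x2') \<in> trans Sa \<longrightarrow>
           (\<exists>u1 x1'. (x1, u1, x1') \<in> trans Sb \<and> (x1', x2') \<in> R))"
    using R unfolding is_ISOP_sim_def by (elim conjE)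
  have stepF: "\<forall>p q w p'. (p,q)\<in>R \<longrightarrow> (p,w,p')\<in>trans Sb \<longrightarrow> (\<exists>v q'. (q,v,q')\<in>trans Sa \<and> (p',q')\<in>R)"
    using Rf by fastforce
  have "\<exists>y v. y 0 = xa0 \<and> (\<forall>i\<in>{1..n}. (y (i-1), v i, y i) \<in> trans Sa) \<and> (\<forall>i\<le>n. (xb i, y i) \<in> R)"
    using xb(2) xa0(2) unfolding is_run_def by (intro sim_run[OF stepF]) auto
  then obtain xa ua where xa: "xa 0 = xa0" "\<forall>i\<in>{1..n}. (xa (i-1), ua i, xa i) \<in> trans Sa"
      "\<forall>i\<le>n. (xb i, xa i) \<in> R" by blast
  obtain xa' ua' where xa': "xa' 0 \<in> init Sa - secret Sa" "is_run Sa n xa' ua'"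
      "\<forall>i\<in>{0..n}. dist (outmap Sa (xa i)) (outmap Sa (xa' i)) \<le> \<delta>"
    using op xa xa0(1) unfolding approx_init_opaque_def is_run_def by blast
  obtain xb0' where xb0': "xb0' \<in> init Sb - secret Sb" "(xb0', xa' 0) \<in> R"
    using R xa'(1) unfolding is_ISOP_sim_def by blast
  have stepB: "\<forall>p q w p'. (p,q)\<in>R\<inverse> \<longrightarrow> (p,w,p')\<in>trans Sa \<longrightarrow> (\<exists>v q'. (q,v,q')\<in>trans Sb \<and> (p',q')\<in>R\<inverse>)"
    using Rf by fastforce
  have "\<exists>y v. y 0 = xb0' \<and> (\<forall>i\<in>{1..n}. (y (i-1), v i, y i) \<in> trans Sb) \<and> (\<forall>i\<le>n. (xa' i, y i) \<in> R\<inverse>)"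
    using xa'(2) xb0'(2) unfolding is_run_def by (intro sim_run[OF stepB]) auto
  then obtain xb' ub' where xb': "xb' 0 = xb0'" "\<forall>i\<in>{1..n}. (xb' (i-1), ub' i, xb' i) \<in> trans Sb"
      "\<forall>i\<le>n. (xa' i, xb' i) \<in> R\<inverse>" by blast
  have D: "dist (outmap Sb p) (outmap Sa q) \<le> \<epsilon>" if "(p,q) \<in> R" for p q
    using R that unfolding is_ISOP_sim_def by blast
  have "\<forall>i\<in>{0..n}. dist (outmap Sb (xb i)) (outmap Sb (xb' i)) \<le> \<delta> + 2 * \<epsilon>"
  proof
    fix i assume i: "i \<in> {0..n}"
    have a: "dist (outmap Sb (xb i)) (outmap Sa (xa i)) \<le> \<epsilon>" using D xa(3) i by auto
    have b: "dist (outmap Sb (xb' i)) (outmap Sa (xa' i)) \<le> \<epsilon>" using D xb'(3) i by auto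
    have c: "dist (outmap Sa (xa i)) (outmap Sa (xa' i)) \<le> \<delta>" using xa'(3) i by auto
    have "dist (outmap Sb (xb i)) (outmap Sb (xb' i)) \<le>
       dist (outmap Sb (xb i)) (outmap Sa (xa i)) + dist (outmap Sa (xa i)) (outmap Sa (xa' i))
       + dist (outmap Sb (xb' i)) (outmap Sa (xa' i))"
    proof -
      have t1: "dist (outmap Sb (xb i)) (outmap Sb (xb' i)) \<le> dist (outmap Sb (xb i)) (outmap Sa (xa i)) + dist (outmap Sa (xa i)) (outmap Sb (xb' i))"
        by (rule dist_triangle)
      have t2: "dist (outmap Sa (xa i)) (outmap Sb (xb' i)) \<le> dist (outmap Sa (xa i)) (outmap Sa (xa' i)) + dist (outmap Sa (xa' i)) (outmap Sb (xb' i))"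
        by (rule dist_triangle)
      have t3: "dist (outmap Sa (xa' i)) (outmap Sb (xb' i)) = dist (outmap Sb (xb' i)) (outmap Sa (xa' i))"
        by (rule dist_commute)
      show ?thesis using t1 t2 t3 by linarith
    qed
    then show "dist (outmap Sb (xb i)) (outmap Sb (xb' i)) \<le> \<delta> + 2 * \<epsilon>" using a b c by linarith
  qed
  then show False using nop xb' xb0'(1) unfolding is_run_def by blast
qed

end
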